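(* Let $n,m\ge 2$ and let $\mathsf{R}=(\mathsf{R}_1,\dots,\mathsf{R}_m)\in(0,1]^m$. Consider the game $\mathcal{G}_{\rm perfect}$ in which each of the $n$ players $P_1,\dots,P_n$ chooses a mixed strategy $s^{(i)}=(s^{(i)}_1,\dots,s^{(i)}_m)\in\Delta_m$ (a probability vector over the $m$ servers) and receives expected utility $$u_i(s^{(1)},\dots,s^{(n)})=\sum_{j=1}^m \mathsf{R}_j\,\frac{s^{(i)}_j}{\sum_{k=1}^n s^{(k)}_j},$$ where a term with vanishing denominator is taken to be $0$. Then $\mathcal{G}_{\rm perfect}$ has a unique Nash equilibrium, namely the symmetric profile $s^*=(s^{*(1)},\dots,s^{*(n)})$ with $s^{*(i)}=\mathsf{N}(\mathsf{R})$ for every $i\in[n]$.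
   Context: For a nonzero vector $v\in[0,\infty)^m$, $\mathsf{N}(v)=\big(v_1/\|v\|_1,\dots,v_m/\|v\|_1\big)$ denotes its $L_1$-normalization. $\Delta_m=\{x\in[0,1]^m:\sum_j x_j=1\}$. Interpretation: $\mathsf{R}_j$ is the trustworthiness (probability of correct behaviour) of server $j$, known to all players (perfect information); the utility is the expected reward when server $j$ yields a unit reward with probability $\mathsf{R}_j$, split among players in proportion to their endorsement probabilities of server $j$. (In the paper's full game players may also endorse other players, but such actions are dominated; the game above is the resulting game with actions restricted to the servers.) A Nash equilibrium is a profile of mixed strategies in which no player can increase her expected utility by unilaterally changing her strategy. *)

theory Defs
  imports Complex_Main
begin

text \<open>Players are indexed by 0..<n, servers by 0..<m.
  A strategy profile is s :: nat => nat => real, where s i j is the probability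
  with which player i endorses server j.\<close>

definition simplex :: "nat \<Rightarrow> (nat \<Rightarrow> real) \<Rightarrow> bool" where
  "simplex m x \<longleftrightarrow> (\<forall>j<m. 0 \<le> x j \<and> x j \<le> 1) \<and> (\<Sum>j<m. x j) = 1"

definition l1_normalize :: "nat \<Rightarrow> (nat \<Rightarrow> real) \<Rightarrow> (nat \<Rightarrow> real)" where
  "l1_normalize m v = (\<lambda>j. v j / (\<Sum>k<m. \<bar>v k\<bar>))"

text \<open>Expected utility of player i; division by 0 yields 0 in Isabelle/HOL,
  matching the convention that terms with vanishing denominator are 0.\<close>
definition utility :: "nat \<Rightarrow> nat \<Rightarrow> (nat \<Rightarrow> real) \<Rightarrow> (nat \<Rightarrow> nat \<Rightarrow> real) \<Rightarrow> nat \<Rightarrow> real" where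
  "utility n m R s i = (\<Sum>j<m. R j * (s i j / (\<Sum>k<n. s k j)))"

definition nash_eq :: "nat \<Rightarrow> nat \<Rightarrow> (nat \<Rightarrow> real) \<Rightarrow> (nat \<Rightarrow> nat \<Rightarrow> real) \<Rightarrow> bool" where
  "nash_eq n m R s \<longleftrightarrow>
     (\<forall>i<n. simplex m (s i)) \<and>
     (\<forall>i<n. \<forall>t. simplex m t \<longrightarrow> utility n m R (s(i := t)) i \<le> utility n m R s i)"

end

theory Submission
  imports Defs
begin

lemma sum_upd:
  fixes s :: "nat \<Rightarrow> nat \<Rightarrow> real"
  assumes "i < n"
  shows "(\<Sum>k<n. (s(i:=t)) k j) = (\<Sum>k<n. s k j) - s i j + t j"
proof -
  have "(\<Sum>k<n. (s(i:=t)) k j) = (\<Sum>k<n. s k j + (if k = i then t j - s i j else 0))"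
    by (rule sum.cong) auto
  also have "\<dots> = (\<Sum>k<n. s k j) - s i j + t j"
    using assms by (simp add: sum.distrib sum.delta sum.delta')
  finally show ?thesis .
qed

lemma nash_nonneg:
  assumes "nash_eq n m R s" "i < n" "j < m"
  shows "0 \<le> s i j"
  using assms unfolding nash_eq_def simplex_def by auto

lemma nash_sum1:
  assumes "nash_eq n m R s" "i < n"
  shows "(\<Sum>j<m. s i j) = 1"
  using assms unfolding nash_eq_def simplex_def by auto

lemma move:
  assumes N: "nash_eq n m R s" and i: "i < n" and j: "j < m" and k: "k < m" and jk: "j \<noteq> k"
    and e: "0 < e" "e \<le> s i j"
  shows "R k * ((s i k + e) / ((\<Sum>q<n. s q k) + e) - s i k / (\<Sum>q<n. s q k))
       + R j * ((s i j - e) / ((\<Sum>q<n. s q j) - e) - s i j / (\<Sum>q<n. s q j)) \<le> 0"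
proof -
  define t where "t = (\<lambda>l. s i l + (if l = j then -e else 0) + (if l = k then e else 0))"
  have nn: "\<And>l. l < m \<Longrightarrow> 0 \<le> s i l" using nash_nonneg[OF N i] by auto
  have s1: "(\<Sum>l<m. s i l) = 1" using nash_sum1[OF N i] .
  have sumt: "(\<Sum>l<m. t l) = 1"
    using j k s1 by (simp add: t_def sum.distrib)
  have two: "s i j + s i k \<le> 1"
  proof -
    have "(\<Sum>l\<in>{j,k}. s i l) \<le> (\<Sum>l<m. s i l)"
      by (rule sum_mono2) (use j k nn in auto)
    then show ?thesis using jk s1 by simp
  qed
  have simp_t: "simplex m t"
    unfolding simplex_def
  proof (intro conjI allI impI)
    fix l assume l: "l < m"
    show "0 \<le> t l" using nn[OF l] e jk by (auto simp: t_def)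
    show "t l \<le> 1"
    proof -
      have "s i l \<le> 1"
      proof -
        have "(\<Sum>l\<in>{l}. s i l) \<le> (\<Sum>l<m. s i l)"
          by (rule sum_mono2) (use l nn in auto)
        then show ?thesis using s1 by simp
      qed
      then show ?thesis using e two jk nn[OF l] nn[OF j] nn[OF k] by (auto simp: t_def)
    qed
  qed (rule sumt)
  have le: "utility n m R (s(i := t)) i \<le> utility n m R s i"
    using N i simp_t unfolding nash_eq_def by blast
  define T where "T = (\<lambda>l. \<Sum>q<n. s q l)"
  have "utility n m R (s(i := t)) i - utility n m R s i =
     (\<Sum>l<m. R l * (t l / (T l - s i l + t l)) - R l * (s i l / T l))"
  proof -
    have h: "\<And>l. (\<Sum>q<n. (s(i:=t)) q l) = T l - s i l + t l"
      unfolding T_def by (rule sum_upd[OF i])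
    show ?thesis unfolding utility_def h T_def[symmetric] by (simp add: sum_subtractf T_def)
  qed
  also have "\<dots> = (\<Sum>l<m. (if l = k then R k * ((s i k + e) / (T k + e) - s i k / T k) else 0)
        + (if l = j then R j * ((s i j - e) / (T j - e) - s i j / T j) else 0))"
    by (rule sum.cong) (use jk in \<open>auto simp: t_def right_diff_distrib\<close>)
  also have "\<dots> = R k * ((s i k + e) / (T k + e) - s i k / T k) + R j * ((s i j - e) / (T j - e) - s i j / T j)"
    using j k by (simp add: sum.distrib)
  finally show ?thesis using le unfolding T_def by linarith
qed

lemma T_pos:
  assumes N: "nash_eq n m R s" and n: "0 < n" and R: "\<forall>j<m. 0 < R j" and j: "j < m"
  shows "0 < (\<Sum>q<n. s q j)"
proof (rule ccontr)
  assume "\<not> 0 < (\<Sum>q<n. s q j)"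
  moreover have "0 \<le> (\<Sum>q<n. s q j)"
    by (rule sum_nonneg) (use nash_nonneg[OF N _ j] in auto)
  ultimately have T0: "(\<Sum>q<n. s q j) = 0" by linarith
  have "\<forall>q\<in>{..<n}. s q j = 0"
    using T0 sum_nonneg_eq_0_iff[of "{..<n}" "\<lambda>q. s q j"] nash_nonneg[OF N _ j] by auto
  then have s0j: "s 0 j = 0" using n by auto
  obtain l where l: "l < m" "0 < s 0 l"
  proof (rule ccontr)
    assume "\<not> thesis"
    then have "\<forall>l<m. s 0 l \<le> 0" using that by force
    then have "\<forall>l<m. s 0 l = 0" using nash_nonneg[OF N n] by force
    then have "(\<Sum>l<m. s 0 l) = 0" by simp
    then show False using nash_sum1[OF N n] by simp
  qed
  have lj: "l \<noteq> j" using l s0j by auto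
  define b where "b = s 0 l"
  define B where "B = (\<Sum>q<n. s q l)"
  have bB: "b \<le> B" unfolding b_def B_def
    by (rule member_le_sum) (use n nash_nonneg[OF N _ l(1)] in auto)
  have bpos: "0 < b" using l b_def by simp
  have ev: "eventually (\<lambda>e. R j + R l * ((b - e) / (B - e) - b / B) \<le> 0) (at_right 0)"
    unfolding eventually_at_right_field
  proof (intro exI[of _ b] conjI allI impI)
    show "0 < b" by (rule bpos)
    fix e :: real assume e: "0 < e" "e < b"
    have "R j * ((s 0 j + e) / ((\<Sum>q<n. s q j) + e) - s 0 j / (\<Sum>q<n. s q j))
       + R l * ((s 0 l - e) / ((\<Sum>q<n. s q l) - e) - s 0 l / (\<Sum>q<n. s q l))  \<le> 0"
      by (rule move[OF N n l(1) j lj]) (use e b_def in auto)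
    then show "R j + R l * ((b - e) / (B - e) - b / B) \<le> 0"
      using e unfolding b_def B_def s0j T0 by simp
  qed
  have lim: "((\<lambda>e. R j + R l * ((b - e) / (B - e) - b / B)) \<longlongrightarrow> R j + R l * ((b - 0) / (B - 0) - b / B)) (at_right 0)"
    using bB bpos by (intro tendsto_intros) auto
  have "R j + R l * ((b - 0) / (B - 0) - b / B) \<le> 0"
    by (rule tendsto_le[OF _ tendsto_const lim ev]) simp
  then have "R j \<le> 0" by simp
  then show False using R j by auto
qed

lemma FOC:
  assumes N: "nash_eq n m R s" and i: "i < n" and R: "\<forall>j<m. 0 < R j"
    and j: "j < m" and k: "k < m" and jk: "j \<noteq> k" and sij: "0 < s i j"
  shows "R k * ((\<Sum>q<n. s q k) - s i k) / ((\<Sum>q<n. s q k) * (\<Sum>q<n. s q k))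
       \<le> R j * ((\<Sum>q<n. s q j) - s i j) / ((\<Sum>q<n. s q j) * (\<Sum>q<n. s q j))"
proof -
  have n: "0 < n" using i by simp
  define a where "a = s i k"
  define A where "A = (\<Sum>q<n. s q k)"
  define b where "b = s i j"
  define B where "B = (\<Sum>q<n. s q j)"
  have Apos: "0 < A" unfolding A_def by (rule T_pos[OF N n R k])
  have bB: "b \<le> B" unfolding b_def B_def
    by (rule member_le_sum) (use i nash_nonneg[OF N _ j] in auto)
  have bpos: "0 < b" using sij b_def by simp
  have ev: "eventually (\<lambda>e. R k * (A - a) / (A * (A + e)) - R j * (B - b) / (B * (B - e)) \<le> 0) (at_right 0)"
    unfolding eventually_at_right_field
  proof (intro exI[of _ b] conjI allI impI)
    show "0 < b" by (rule bpos)
    fix e :: real assume e: "0 < e" "e < b"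
    have "R k * ((a + e) / (A + e) - a / A) + R j * ((b - e) / (B - e) - b / B) \<le> 0"
      unfolding a_def A_def b_def B_def
      by (rule move[OF N i j k jk]) (use e b_def in auto)
    moreover have "(a + e) / (A + e) - a / A = e * ((A - a) / (A * (A + e)))"
      using Apos e by (simp add: field_simps)
    moreover have "(b - e) / (B - e) - b / B = - (e * ((B - b) / (B * (B - e))))"
      using bB e bpos by (simp add: field_simps)
    ultimately have "e * (R k * (A - a) / (A * (A + e)) - R j * (B - b) / (B * (B - e))) \<le> 0"
      by (simp add: algebra_simps)
    then show "R k * (A - a) / (A * (A + e)) - R j * (B - b) / (B * (B - e)) \<le> 0"
      using e by (simp add: mult_le_0_iff)
  qed
  have lim: "((\<lambda>e. R k * (A - a) / (A * (A + e)) - R j * (B - b) / (B * (B - e)))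
     \<longlongrightarrow> R k * (A - a) / (A * (A + 0)) - R j * (B - b) / (B * (B - 0))) (at_right 0)"
    using bB bpos Apos by (intro tendsto_intros) auto
  have "R k * (A - a) / (A * (A + 0)) - R j * (B - b) / (B * (B - 0)) \<le> 0"
    by (rule tendsto_le[OF _ tendsto_const lim ev]) simp
  then show ?thesis unfolding a_def A_def b_def B_def by simp
qed

lemma key_ineq:
  fixes c r x :: real
  assumes "1 \<le> c" "0 < r" "0 \<le> x"
  shows "r * (x / (c * r + x)) \<le> (r + c * x) / (c + 1)^2"
proof -
  have d: "0 < c * r + x" using assms by (simp add: add_pos_nonneg)
  have "r * x * (c + 1)^2 \<le> (r + c * x) * (c * r + x)"
  proof -
    have "(r + c * x) * (c * r + x) - r * x * (c + 1)^2 = c * (r - x)^2"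
      by (simp add: power2_eq_square algebra_simps)
    moreover have "0 \<le> c * (r - x)^2" using assms by simp
    ultimately show ?thesis by linarith
  qed
  then show ?thesis using d assms by (simp add: field_simps)
qed

lemma eq_players:
  assumes N: "nash_eq n m R s" and R: "\<forall>j<m. 0 < R j" and i: "i < n" and i': "i' < n" and l: "l < m"
  shows "s i l = s i' l"
proof (rule ccontr)
  assume ne: "s i l \<noteq> s i' l"
  have ex: "\<exists>j<m. s a j > s b j" if a: "a < n" and b: "b < n" and nab: "s a l \<noteq> s b l" for a b
  proof (rule ccontr)
    assume "\<not> ?thesis"
    then have le: "\<forall>j\<in>{..<m}. s a j \<le> s b j" by auto
    have "s a l < s b l" using le l nab by force
    then have "(\<Sum>j<m. s a j) < (\<Sum>j<m. s b j)"
      using le l by (intro sum_strict_mono_ex1) auto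
    then show False using nash_sum1[OF N a] nash_sum1[OF N b] by simp
  qed
  obtain j where j: "j < m" "s i j > s i' j" using ex[OF i i' ne] by blast
  obtain k where k: "k < m" "s i' k > s i k" using ex[OF i' i] ne by auto
  have jk: "j \<noteq> k" using j k by auto
  define T where "T = (\<lambda>l. \<Sum>q<n. s q l)"
  have n: "0 < n" using i by simp
  have Tj: "0 < T j" unfolding T_def by (rule T_pos[OF N n R j(1)])
  have Tk: "0 < T k" unfolding T_def by (rule T_pos[OF N n R k(1)])
  have sij: "0 < s i j" using j nash_nonneg[OF N i' j(1)] by linarith
  have si'k: "0 < s i' k" using k nash_nonneg[OF N i k(1)] by linarith
  have f1: "R k * (T k - s i k) / (T k * T k) \<le> R j * (T j - s i j) / (T j * T j)"
    unfolding T_def by (rule FOC[OF N i R j(1) k(1) jk sij])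
  have f2: "R j * (T j - s i' j) / (T j * T j) \<le> R k * (T k - s i' k) / (T k * T k)"
    unfolding T_def by (rule FOC[OF N i' R k(1) j(1) jk[symmetric] si'k])
  have g1: "R j * (T j - s i j) / (T j * T j) < R j * (T j - s i' j) / (T j * T j)"
    using Tj R j by (intro divide_strict_right_mono mult_strict_left_mono) auto
  have g2: "R k * (T k - s i' k) / (T k * T k) < R k * (T k - s i k) / (T k * T k)"
    using Tk R k by (intro divide_strict_right_mono mult_strict_left_mono) auto
  show False using f1 f2 g1 g2 by linarith
qed

theorem mainTheorem1:
  fixes n m :: nat and R :: "nat \<Rightarrow> real"
  assumes "n \<ge> 2" and "m \<ge> 2"
    and "\<forall>j<m. 0 < R j \<and> R j \<le> 1"
  shows "nash_eq n m R (\<lambda>i. l1_normalize m R)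
         \<and> (\<forall>s. nash_eq n m R s \<longrightarrow> (\<forall>i<n. \<forall>j<m. s i j = l1_normalize m R j))"
proof -
  have R: "\<forall>j<m. 0 < R j" using assms(3) by auto
  define S where "S = (\<Sum>k<m. R k)"
  have Spos: "0 < S" unfolding S_def
    by (rule sum_pos) (use R assms(2) in \<open>auto simp: lessThan_empty_iff\<close>)
  have l1: "l1_normalize m R = (\<lambda>j. R j / S)"
  proof -
    have "(\<Sum>k<m. \<bar>R k\<bar>) = S" unfolding S_def by (rule sum.cong) (use R in auto)
    then show ?thesis unfolding l1_normalize_def by simp
  qed
  define r where "r = (\<lambda>j. R j / S)"
  have rpos: "\<And>j. j < m \<Longrightarrow> 0 < r j" using R Spos by (simp add: r_def)
  have RS: "\<And>j. R j = S * r j" using Spos by (simp add: r_def)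
  have rsimp: "simplex m r"
    unfolding simplex_def
  proof (intro conjI allI impI)
    fix j assume j: "j < m"
    show "0 \<le> r j" using rpos[OF j] by simp
    have "R j \<le> S" unfolding S_def by (rule member_le_sum) (use j R in auto)
    then show "r j \<le> 1" using Spos by (simp add: r_def)
  next
    show "(\<Sum>j<m. r j) = 1" using Spos by (simp add: r_def S_def sum_divide_distrib[symmetric])
  qed
  have n0: "0 < n" using assms(1) by simp
  have part1: "nash_eq n m R (\<lambda>i. r)"
    unfolding nash_eq_def
  proof (intro conjI allI impI)
    fix i assume "i < n" show "simplex m r" by (rule rsimp)
  next
    fix i t assume i: "i < n" and t: "simplex m t"
    define c where "c = real n - 1"
    have c1: "1 \<le> c" using assms(1) by (simp add: c_def)
    have tnn: "\<And>j. j < m \<Longrightarrow> 0 \<le> t j" using t by (simp add: simplex_def)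
    have tsum: "(\<Sum>j<m. t j) = 1" using t by (simp add: simplex_def)
    have us: "utility n m R (\<lambda>i. r) i = S / real n"
    proof -
      have "utility n m R (\<lambda>i. r) i = (\<Sum>j<m. R j / real n)"
        unfolding utility_def by (rule sum.cong) (use rpos n0 in \<open>auto, metis less_irrefl\<close>)
      also have "\<dots> = S / real n" by (simp add: S_def sum_divide_distrib)
      finally show ?thesis .
    qed
    have "utility n m R ((\<lambda>i. r)(i := t)) i = (\<Sum>j<m. S * (r j * (t j / (c * r j + t j))))"
      unfolding utility_def
    proof (rule sum.cong)
      fix j assume "j \<in> {..<m}"
      have "(\<Sum>k<n. ((\<lambda>i. r)(i := t)) k j) = c * r j + t j"
        using sum_upd[OF i, of "\<lambda>i. r" t j] by (simp add: c_def algebra_simps)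
      then show "R j * (((\<lambda>i. r)(i := t)) i j / (\<Sum>k<n. ((\<lambda>i. r)(i := t)) k j))
          = S * (r j * (t j / (c * r j + t j)))" by (simp add: RS)
    qed simp
    also have "\<dots> \<le> (\<Sum>j<m. S * ((r j + c * t j) / (c + 1)^2))"
    proof (rule sum_mono)
      fix j assume "j \<in> {..<m}"
      then have "r j * (t j / (c * r j + t j)) \<le> (r j + c * t j) / (c + 1)^2"
        using key_ineq[OF c1 rpos tnn] by auto
      then show "S * (r j * (t j / (c * r j + t j))) \<le> S * ((r j + c * t j) / (c + 1)^2)"
        using Spos by (intro mult_left_mono) auto
    qed
    also have "\<dots> = S * (1 + c) / (c + 1)^2"
      using rsimp tsum
      by (simp add: sum_distrib_left[symmetric] sum_divide_distrib[symmetric] sum.distrib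
            sum_distrib_left[of c, symmetric] simplex_def)
    also have "\<dots> = S / real n" using c1 by (simp add: c_def power2_eq_square)
    finally show "utility n m R ((\<lambda>i. r)(i := t)) i \<le> utility n m R (\<lambda>i. r) i" using us by simp
  qed
  have part2: "\<forall>i<n. \<forall>j<m. s i j = r j" if N: "nash_eq n m R s" for s
  proof (intro allI impI)
    fix i j assume i: "i < n" and j: "j < m"
    define x where "x = s 0"
    have same: "\<And>q l. q < n \<Longrightarrow> l < m \<Longrightarrow> s q l = x l"
      unfolding x_def using eq_players[OF N R] n0 by blast
    have T: "\<And>l. l < m \<Longrightarrow> (\<Sum>q<n. s q l) = real n * x l"
      using same by simp
    have xpos: "\<And>l. l < m \<Longrightarrow> 0 < x l"
      proof -
      fix l assume l: "l < m"
      have "0 < real n * x l" using T_pos[OF N n0 R l] T[OF l] by simp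
      then show "0 < x l" using n0 by (simp add: zero_less_mult_iff)
    qed
    have ratio: "R k / x k \<le> R l / x l" if k: "k < m" and l: "l < m" for k l
    proof (cases "k = l")
      case False
      have "R k * ((\<Sum>q<n. s q k) - s 0 k) / ((\<Sum>q<n. s q k) * (\<Sum>q<n. s q k))
         \<le> R l * ((\<Sum>q<n. s q l) - s 0 l) / ((\<Sum>q<n. s q l) * (\<Sum>q<n. s q l))"
        by (rule FOC[OF N n0 R l k]) (use False xpos[OF l] x_def in auto)
      moreover have "\<And>q. q < m \<Longrightarrow> R q * ((\<Sum>q'<n. s q' q) - s 0 q) / ((\<Sum>q'<n. s q' q) * (\<Sum>q'<n. s q' q))
          = (R q / x q) * ((real n - 1) / (real n * real n))"
      proof -
        fix q assume q: "q < m"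
        have xq: "0 < x q" by (rule xpos[OF q])
        have Tq: "(\<Sum>q'<n. s q' q) = real n * x q" by (rule T[OF q])
        have s0: "s 0 q = x q" by (simp add: x_def)
        show "R q * ((\<Sum>q'<n. s q' q) - s 0 q) / ((\<Sum>q'<n. s q' q) * (\<Sum>q'<n. s q' q))
          = (R q / x q) * ((real n - 1) / (real n * real n))"
          unfolding Tq s0 using xq n0 by (simp add: field_simps power2_eq_square)
      qed
      ultimately have "(R k / x k) * ((real n - 1) / (real n * real n)) \<le> (R l / x l) * ((real n - 1) / (real n * real n))"
        using k l by simp
      moreover have "0 < (real n - 1) / (real n * real n)" using assms(1) by simp
      ultimately show ?thesis by (metis mult_le_cancel_right_pos)
    qed simp
    define c where "c = R 0 / x 0"
    have m0: "0 < m" using assms(2) by simp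
    have Rc: "\<And>l. l < m \<Longrightarrow> R l = c * x l"
    proof -
      fix l assume l: "l < m"
      have "R l / x l = c" unfolding c_def using ratio[OF l m0] ratio[OF m0 l] by simp
      then show "R l = c * x l" using xpos[OF l] by (simp add: field_simps)
    qed
    have "S = c * (\<Sum>l<m. x l)" unfolding S_def using Rc by (simp add: sum_distrib_left)
    also have "(\<Sum>l<m. x l) = 1" using nash_sum1[OF N n0] by (simp add: x_def)
    finally have "S = c" by simp
    then show "s i j = r j" using same[OF i j] Rc[OF j] Spos by (simp add: r_def)
  qed
  show ?thesis unfolding l1 r_def[symmetric] using part1 part2 by blast
qed

end
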